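(* Let $T_1,T_2\in B(H)$ satisfy $\|T_1T_1^*+T_2T_2^*\|\le1$, and let $p(t)=\sum_{j=0}^Nc_jt^j$ be a polynomial in one complex variable. Then $$\|p(T_1)T_2\|\le\Big(\int_{\mathbb T}|p(t)|^2\,dm(t)\Big)^{1/2}=\Big(\sum_{j=0}^N|c_j|^2\Big)^{1/2},$$ where $m$ is normalized Lebesgue measure on the unit circle $\mathbb T$.
   Context: $H$ is a Hilbert space and $\|\cdot\|$ the operator norm on $B(H)$. *)

theory Defs
  imports "HOL-Analysis.Analysis"
begin

class complex_vector = real_vector +
  fixes scaleC :: "complex \<Rightarrow> 'a \<Rightarrow> 'a"
  assumes scaleC_add_right: "scaleC a (x + y) = scaleC a x + scaleC a y"
    and scaleC_add_left: "scaleC (a + b) x = scaleC a x + scaleC b x"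
    and scaleC_scaleC: "scaleC a (scaleC b x) = scaleC (a * b) x"
    and scaleC_one: "scaleC 1 x = x"
    and scaleR_scaleC: "scaleR r x = scaleC (complex_of_real r) x"

text \<open>Inner product: linear in the second, conjugate-linear in the first argument.\<close>
class complex_inner = complex_vector + real_normed_vector +
  fixes cinner :: "'a \<Rightarrow> 'a \<Rightarrow> complex"
  assumes cinner_commute: "cinner x y = cnj (cinner y x)"
    and cinner_add_right: "cinner x (y + z) = cinner x y + cinner x z"
    and cinner_scaleC_right: "cinner x (scaleC r y) = r * cinner x y"
    and cinner_self_norm: "cinner x x = complex_of_real ((norm x)\<^sup>2)"

class chilbert = complex_inner + complete_space

definition bounded_clinear :: "('a::complex_inner \<Rightarrow> 'b::complex_inner) \<Rightarrow> bool" where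
  "bounded_clinear f \<longleftrightarrow> bounded_linear f \<and> (\<forall>c x. f (scaleC c x) = scaleC c (f x))"

definition cadjoint :: "('a::complex_inner \<Rightarrow> 'a) \<Rightarrow> ('a \<Rightarrow> 'a)" where
  "cadjoint T = (THE S. \<forall>x y. cinner (T x) y = cinner x (S y))"

definition poly_op :: "(nat \<Rightarrow> complex) \<Rightarrow> nat \<Rightarrow> ('a::complex_vector \<Rightarrow> 'a) \<Rightarrow> 'a \<Rightarrow> 'a" where
  "poly_op c N T x = (\<Sum>j\<le>N. scaleC (c j) ((T ^^ j) x))"

end

theory Submission
  imports Defs
begin

lemma cinner_zero_right[simp]: "cinner x (0::'a::complex_inner) = 0"
  using cinner_add_right[of x "0::'a" 0] by simp

lemma cinner_zero_left[simp]: "cinner (0::'a::complex_inner) x = 0"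
  by (metis cinner_commute cinner_zero_right complex_cnj_zero)

lemma cinner_add_left: "cinner (x + y) (z::'a::complex_inner) = cinner x z + cinner y z"
  by (metis cinner_add_right cinner_commute complex_cnj_add)

lemma cinner_scaleC_left: "cinner (scaleC r x) (y::'a::complex_inner) = cnj r * cinner x y"
  by (metis cinner_commute cinner_scaleC_right complex_cnj_cnj complex_cnj_mult)

lemma cinner_minus_right: "cinner x (- y) = - cinner x (y::'a::complex_inner)"
proof -
  have h: "cinner x y + cinner x (-y) = 0" using cinner_add_right[of x y "-y"] by simp
  have "cinner x (-y) = (cinner x y + cinner x (-y)) - cinner x y" by simp
  with h show ?thesis by simp
qed

lemma cinner_minus_left: "cinner (- x) y = - cinner x (y::'a::complex_inner)"
  by (metis cinner_commute cinner_minus_right complex_cnj_minus)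

lemma cinner_diff_right: "cinner x (y - z) = cinner x y - cinner x (z::'a::complex_inner)"
  using cinner_add_right[of x y "-z"] cinner_minus_right[of x z] by (metis diff_conv_add_uminus)

lemma cinner_diff_left: "cinner (x - y) z = cinner x z - cinner y (z::'a::complex_inner)"
  using cinner_add_left[of x "-y" z] cinner_minus_left[of y z] by (metis diff_conv_add_uminus)

lemma cinner_sum_right: "cinner x (sum f A) = (\<Sum>i\<in>A. cinner x (f i::'a::complex_inner))"
  by (induction A rule: infinite_finite_induct) (auto simp: cinner_add_right)

lemma cinner_self_eq_0: "cinner x x = 0 \<longleftrightarrow> x = (0::'a::complex_inner)"
  by (simp add: cinner_self_norm)

lemma cinner_self_Re: "Re (cinner x x) = (norm (x::'a::complex_inner))\<^sup>2"
  by (simp add: cinner_self_norm)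

lemma norm_sq_add: "(norm (x + y))\<^sup>2 = (norm x)\<^sup>2 + (norm y)\<^sup>2 + 2 * Re (cinner x (y::'a::complex_inner))"
proof -
  have "cinner (x+y) (x+y) = cinner x x + cinner y y + (cinner x y + cnj (cinner x y))"
    by (simp add: cinner_add_left cinner_add_right cinner_commute[of y x])
  then have "Re (cinner (x+y) (x+y)) = Re (cinner x x) + Re (cinner y y) + 2 * Re (cinner x y)"
    by simp
  then show ?thesis by (simp add: cinner_self_Re)
qed

lemma norm_sq_diff: "(norm (x - y))\<^sup>2 = (norm x)\<^sup>2 + (norm y)\<^sup>2 - 2 * Re (cinner x (y::'a::complex_inner))"
  using norm_sq_add[of x "-y"] by (simp add: cinner_minus_right)

lemma Re_cinner_le: "Re (cinner x y) \<le> norm x * norm (y::'a::complex_inner)"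
proof -
  have "norm (x+y) \<le> norm x + norm y" by (rule norm_triangle_ineq)
  then have "(norm (x+y))\<^sup>2 \<le> (norm x + norm y)\<^sup>2"
    by (simp add: power_mono)
  then show ?thesis unfolding norm_sq_add by (simp add: power2_eq_square algebra_simps)
qed

lemma scaleC_zero_left[simp]: "scaleC 0 x = (0::'a::complex_vector)"
  using scaleC_add_left[of 0 0 x] by simp

lemma scaleC_zero_right[simp]: "scaleC a 0 = (0::'a::complex_vector)"
  using scaleC_add_right[of a 0 0] by simp

lemma norm_scaleC: "norm (scaleC a x) = cmod a * norm (x::'a::complex_inner)"
proof -
  have e1: "cnj a * a = of_real ((cmod a)\<^sup>2)" by (metis complex_norm_square mult.commute)
  have "cinner (scaleC a x) (scaleC a x) = cnj a * a * cinner x x"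
    by (simp add: cinner_scaleC_left cinner_scaleC_right mult.assoc)
  also have "\<dots> = of_real ((cmod a)\<^sup>2) * of_real ((norm x)\<^sup>2)"
    by (simp only: e1 cinner_self_norm)
  also have "\<dots> = of_real ((cmod a * norm x)\<^sup>2)" by (simp add: power_mult_distrib)
  finally have "(norm (scaleC a x))\<^sup>2 = (cmod a * norm x)\<^sup>2"
    using cinner_self_Re[of "scaleC a x"] by simp
  then show ?thesis by (simp add: power2_eq_iff_nonneg)
qed

lemma cinner_CS: "cmod (cinner x y) \<le> norm x * norm (y::'a::complex_inner)"
proof (cases "cinner x y = 0")
  case True then show ?thesis by simp
next
  case False
  define w where "w = cinner x y"
  define a where "a = cnj w / of_real (cmod w)"
  have ca: "cmod a = 1" using False by (simp add: a_def w_def norm_divide)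
  have "cinner x (scaleC a y) = a * w" by (simp add: cinner_scaleC_right w_def)
  also have "a * w = of_real ((cmod w)\<^sup>2) / of_real (cmod w)"
    unfolding a_def complex_norm_square by (simp add: mult.commute)
  also have "\<dots> = of_real (cmod w)" using False by (simp add: power2_eq_square w_def)
  finally have "cmod w = Re (cinner x (scaleC a y))" by simp
  also have "\<dots> \<le> norm x * norm (scaleC a y)" by (rule Re_cinner_le)
  also have "\<dots> = norm x * norm y" by (simp add: norm_scaleC ca)
  finally show ?thesis by (simp add: w_def)
qed

lemma cinner_ext: "(\<And>x. cinner x u = cinner x v) \<Longrightarrow> u = (v::'a::complex_inner)"
proof -
  assume h: "\<And>x. cinner x u = cinner x v"
  have "cinner (u - v) (u - v) = 0" using h[of "u-v"] by (simp add: cinner_diff_right)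
  then show ?thesis by (simp add: cinner_self_eq_0)
qed

lemma functional_bl:
  fixes f :: "'a::complex_inner \<Rightarrow> complex"
  assumes add: "\<And>x y. f (x+y) = f x + f y" and sc: "\<And>a x. f (scaleC a x) = a * f x"
    and bd: "\<And>x. cmod (f x) \<le> K * norm x"
  shows "bounded_linear f"
proof (rule bounded_linear_intro[where K=K])
  show "f (x + y) = f x + f y" for x y by (rule add)
  show "f (r *\<^sub>R x) = r *\<^sub>R f x" for r x
    by (simp add: scaleR_scaleC sc scaleR_conv_of_real)
  show "norm (f x) \<le> norm x * K" for x using bd[of x] by (simp add: mult.commute)
qed

lemma riesz_norming:
  fixes f :: "'a::chilbert \<Rightarrow> complex"
  assumes add: "\<And>x y. f (x+y) = f x + f y" and sc: "\<And>a x. f (scaleC a x) = a * f x"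
    and bd: "\<And>x. cmod (f x) \<le> norm x"
    and approx: "\<And>e. e > 0 \<Longrightarrow> \<exists>x. norm x \<le> 1 \<and> cmod (f x) > 1 - e"
  shows "\<exists>z. norm z \<le> 1 \<and> f z = 1"
proof -
  have bl: "bounded_linear f" by (rule functional_bl[where K=1]) (use add sc bd in auto)
  interpret f: bounded_linear f by (rule bl)
  have "\<forall>n. \<exists>x. norm x \<le> 1 \<and> cmod (f x) > 1 - 1 / real (Suc n)"
    using approx by simp
  then obtain u where u1: "\<And>n. norm (u n) \<le> 1" and u2: "\<And>n. cmod (f (u n)) > 1 - 1 / real (Suc n)"
    by metis
  define r where "r n = cmod (f (u n))" for n
  have rpos: "r n > 0" for n
  proof -
    have "1 / real (Suc n) \<le> 1" by simp
    then show ?thesis using u2[of n] unfolding r_def by linarith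
  qed
  have rle: "r n \<le> 1" for n using bd[of "u n"] u1[of n] unfolding r_def by linarith
  define x where "x n = scaleC (cnj (f (u n)) / of_real (r n)) (u n)" for n
  have fx: "f (x n) = of_real (r n)" for n
  proof -
    have "f (x n) = cnj (f (u n)) * f (u n) / of_real (r n)" by (simp add: x_def sc)
    also have "cnj (f (u n)) * f (u n) = of_real ((r n)\<^sup>2)"
      unfolding r_def by (metis complex_norm_square mult.commute)
    finally show ?thesis using rpos[of n] by (simp add: power2_eq_square)
  qed
  have nx: "norm (x n) \<le> 1" for n
  proof -
    have "cmod (cnj (f (u n)) / of_real (r n)) = 1"
      using rpos[of n] by (simp add: norm_divide r_def)
    then show ?thesis by (simp add: x_def norm_scaleC u1)
  qed
  have key: "(norm (x m - x n))\<^sup>2 \<le> 4 * (1 / real (Suc m) + 1 / real (Suc n))" for m n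
  proof -
    have s1: "r m + r n \<le> norm (x m + x n)"
      using bd[of "x m + x n"] rpos[of m] rpos[of n] by (simp add: add fx flip: of_real_add)
    have "(norm (x m - x n))\<^sup>2 + (norm (x m + x n))\<^sup>2 = 2 * (norm (x m))\<^sup>2 + 2 * (norm (x n))\<^sup>2"
      by (simp add: norm_sq_add norm_sq_diff)
    also have "\<dots> \<le> 4"
    proof -
      have "(norm (x m))\<^sup>2 \<le> 1" "(norm (x n))\<^sup>2 \<le> 1"
        using nx[of m] nx[of n] by (simp_all add: power_le_one)
      then show ?thesis by simp
    qed
    finally have A: "(norm (x m - x n))\<^sup>2 \<le> 4 - (norm (x m + x n))\<^sup>2" by simp
    have "(r m + r n)\<^sup>2 \<le> (norm (x m + x n))\<^sup>2"
      using s1 rpos[of m] rpos[of n] by (simp add: power_mono)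
    moreover have "4 - (r m + r n)\<^sup>2 \<le> 4 * (1 / real (Suc m) + 1 / real (Suc n))"
    proof -
      have "r m + r n \<ge> 2 - (1 / real (Suc m) + 1 / real (Suc n))"
        using u2[of m] u2[of n] unfolding r_def by linarith
      moreover have "r m + r n \<le> 2" "r m + r n \<ge> 0" using rle[of m] rle[of n] rpos[of m] rpos[of n] by auto
      moreover have "4 - (r m + r n)\<^sup>2 = (2 - (r m + r n)) * (2 + (r m + r n))"
        by (simp add: power2_eq_square algebra_simps)
      moreover have "(2 - (r m + r n)) * (2 + (r m + r n)) \<le> (2 - (r m + r n)) * 4"
        using rle[of m] rle[of n] rpos[of m] rpos[of n] by (intro mult_left_mono) auto
      moreover have "(2 - (r m + r n)) * 4 = 8 - 4 * (r m + r n)" by simp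
      ultimately show ?thesis by (smt (verit))
    qed
    ultimately show ?thesis using A by linarith
  qed
  have "Cauchy x"
  proof (rule metric_CauchyI)
    fix e :: real assume e: "e > 0"
    obtain M :: nat where M: "real M > 8 / e\<^sup>2" using reals_Archimedean2 by blast
    show "\<exists>M. \<forall>m\<ge>M. \<forall>n\<ge>M. dist (x m) (x n) < e"
    proof (intro exI allI impI)
      fix m n assume mn: "m \<ge> M" "n \<ge> M"
      have e2: "e\<^sup>2 > 0" using e by simp
      have "1 / real (Suc m) \<le> 1 / real (Suc M)" "1 / real (Suc n) \<le> 1 / real (Suc M)"
        using mn by (simp_all add: frac_le)
      moreover have "8 / real (Suc M) < e\<^sup>2"
      proof -
        have "8 / e\<^sup>2 < real (Suc M)" using M by simp
        then show ?thesis using e2 by (simp add: field_simps)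
      qed
      ultimately have "4 * (1 / real (Suc m) + 1 / real (Suc n)) < e\<^sup>2" by simp
      with key[of m n] have "(norm (x m - x n))\<^sup>2 < e\<^sup>2" by linarith
      then have "norm (x m - x n) < e" using e by (simp add: power_less_imp_less_base)
      then show "dist (x m) (x n) < e" by (simp add: dist_norm)
    qed
  qed
  then obtain L where L: "x \<longlonglongrightarrow> L" using Cauchy_convergent_iff convergent_def by blast
  have "(\<lambda>n. f (x n)) \<longlonglongrightarrow> f L" by (rule f.tendsto[OF L])
  moreover have "(\<lambda>n. f (x n)) \<longlonglongrightarrow> 1"
  proof -
    have "(\<lambda>n. r n) \<longlonglongrightarrow> 1"
    proof (rule tendsto_sandwich[where f="\<lambda>n. 1 - 1 / real (Suc n)" and h="\<lambda>n. 1"])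
      show "\<forall>\<^sub>F n in sequentially. 1 - 1 / real (Suc n) \<le> r n"
        by (intro always_eventually allI) (unfold r_def, rule less_imp_le[OF u2])
      show "\<forall>\<^sub>F n in sequentially. r n \<le> 1" using rle by auto
      show "(\<lambda>n. 1 - 1 / real (Suc n)) \<longlonglongrightarrow> 1"
        using tendsto_diff[OF tendsto_const LIMSEQ_inverse_real_of_nat] by (simp add: inverse_eq_divide)
    qed simp
    then have "(\<lambda>n. complex_of_real (r n)) \<longlonglongrightarrow> of_real 1" by (rule tendsto_of_real)
    then show ?thesis by (simp add: fx)
  qed
  ultimately have "f L = 1" by (rule LIMSEQ_unique)
  moreover have "norm L \<le> 1"
    using tendsto_norm[OF L] nx by (intro LIMSEQ_le_const2[where X="\<lambda>n. norm (x n)"]) auto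
  ultimately show ?thesis by blast
qed

lemma riesz_from_norming:
  fixes f :: "'a::complex_inner \<Rightarrow> complex"
  assumes add: "\<And>x y. f (x+y) = f x + f y" and sc: "\<And>a x. f (scaleC a x) = a * f x"
    and bd: "\<And>x. cmod (f x) \<le> norm x"
    and z1: "norm z \<le> 1" and fz: "f z = 1"
  shows "f y = cinner z y"
proof -
  have bl: "bounded_linear f" by (rule functional_bl[where K=1]) (use add sc bd in auto)
  interpret f: bounded_linear f by (rule bl)
  have nz: "norm z = 1" using bd[of z] z1 fz by simp
  have orth: "cinner z v = 0" if fv: "f v = 0" for v
  proof (rule ccontr)
    assume w0: "cinner z v \<noteq> 0"
    define w where "w = cinner z v"
    define W where "W = (cmod w)\<^sup>2"
    have Wpos: "W > 0" using w0 by (simp add: W_def w_def)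
    define s where "s = 1 / ((norm v)\<^sup>2 + 1)"
    have np: "(norm v)\<^sup>2 + 1 > 0" by (smt (verit) zero_le_power2)
    have spos: "s > 0" unfolding s_def using np by simp
    have sv: "s * (norm v)\<^sup>2 < 1" unfolding s_def using np by (simp add: field_simps)
    define t where "t = - (of_real s * cnj w)"
    have "1 = cmod (f (z + scaleC t v))" by (simp add: add sc fv fz)
    also have "\<dots> \<le> norm (z + scaleC t v)" by (rule bd)
    finally have "1 \<le> (norm (z + scaleC t v))\<^sup>2" by (simp add: one_le_power)
    also have "(norm (z + scaleC t v))\<^sup>2 = 1 + (cmod t * norm v)\<^sup>2 + 2 * Re (t * w)"
      by (simp add: norm_sq_add nz norm_scaleC cinner_scaleC_right w_def)
    also have "cmod t = s * cmod w" using spos by (simp add: t_def norm_mult)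
    also have "t * w = - of_real (s * W)"
    proof -
      have "w * cnj w = of_real W" unfolding W_def by (rule complex_norm_square[symmetric])
      then show ?thesis by (simp add: t_def mult.commute mult.left_commute)
    qed
    finally have "0 \<le> s * W * (s * (norm v)\<^sup>2) - 2 * (s * W)"
      by (simp add: W_def power_mult_distrib algebra_simps power2_eq_square)
    moreover have "s * W * (s * (norm v)\<^sup>2) < s * W * 1"
      using sv spos Wpos by (intro mult_strict_left_mono) auto
    moreover have "s * W > 0" using spos Wpos by simp
    ultimately show False by linarith
  qed
  define v where "v = y - scaleC (f y) z"
  have "f v = 0" by (simp add: v_def f.diff sc fz)
  then have "cinner z v = 0" by (rule orth)
  moreover have "cinner z z = 1" using nz by (simp add: cinner_self_norm)
  ultimately show ?thesis by (simp add: v_def cinner_diff_right cinner_scaleC_right)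
qed

lemma riesz:
  fixes f :: "'a::chilbert \<Rightarrow> complex"
  assumes add: "\<And>x y. f (x+y) = f x + f y" and sc: "\<And>a x. f (scaleC a x) = a * f x"
    and bd: "\<And>x. cmod (f x) \<le> K * norm x"
  shows "\<exists>z. \<forall>x. f x = cinner z x"
proof -
  have bl: "bounded_linear f" by (rule functional_bl[where K=K]) (use add sc bd in auto)
  interpret f: bounded_linear f by (rule bl)
  define M where "M = onorm f"
  have fM: "cmod (f x) \<le> M * norm x" for x unfolding M_def using onorm[OF bl] by simp
  show ?thesis
  proof (cases "M = 0")
    case True
    then have "f x = 0" for x using fM[of x] by simp
    then show ?thesis by (intro exI[of _ 0]) simp
  next
    case False
    then have Mpos: "M > 0" using onorm_pos_le[OF bl] unfolding M_def by simp
    define g where "g x = f x / of_real M" for x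
    have gadd: "g (x+y) = g x + g y" for x y by (simp add: g_def add add_divide_distrib)
    have gsc: "g (scaleC a x) = a * g x" for a x by (simp add: g_def sc)
    have gbd: "cmod (g x) \<le> norm x" for x
      using fM[of x] Mpos by (simp add: g_def norm_divide pos_divide_le_eq mult.commute)
    have gapprox: "\<exists>x. norm x \<le> 1 \<and> cmod (g x) > 1 - e" if e: "e > 0" for e
    proof -
      define e' where "e' = min e (1/2)"
      have e': "e' > 0" "e' \<le> e" "e' \<le> 1/2" using e by (auto simp: e'_def)
      have bdd: "bdd_above (range (\<lambda>x. norm (f x) / norm x))"
        by (rule bdd_aboveI2[where M="onorm f"]) (rule le_onorm[OF bl])
      have "M - M * e' < M" using Mpos e' by simp
      then have "M - M * e' < (SUP x. norm (f x) / norm x)" by (simp add: M_def onorm_def)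
      then obtain x where x: "M - M * e' < norm (f x) / norm x"
        using less_cSUP_iff[OF _ bdd] by auto
      have "M - M * e' > 0" using Mpos e' by (simp add: algebra_simps)
      then have x0: "x \<noteq> 0" using x by (auto)
      define u where "u = scaleC (of_real (1 / norm x)) x"
      have nu: "norm u = 1" using x0 by (simp add: u_def norm_scaleC norm_divide)
      have gu: "g u = of_real (1 / norm x) * g x" by (simp only: u_def gsc)
      have "cmod (g u) = (norm (f x) / norm x) / M"
        using x0 Mpos unfolding gu by (simp add: g_def norm_divide norm_mult)
      also have "\<dots> > (M - M * e') / M" using divide_strict_right_mono[OF x Mpos] by simp
      also have "(M - M * e') / M = 1 - e'" using Mpos by (simp add: field_simps)
      finally show ?thesis using nu e' by (intro exI[of _ u]) auto
    qed
    obtain z where z: "norm z \<le> 1" "g z = 1"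
      using riesz_norming[of g, OF gadd gsc gbd gapprox] by blast
    have "g x = cinner z x" for x by (rule riesz_from_norming[OF gadd gsc gbd z])
    then have "f x = cinner (scaleC (of_real M) z) x" for x
      using Mpos by (simp add: g_def cinner_scaleC_left field_simps)
    then show ?thesis by blast
  qed
qed

lemma adjoint_prop:
  fixes T :: "'a::chilbert \<Rightarrow> 'a"
  assumes "bounded_clinear T"
  shows "cinner (T x) y = cinner x (cadjoint T y)"
proof -
  have bl: "bounded_linear T" and Tsc: "\<And>c x. T (scaleC c x) = scaleC c (T x)"
    using assms by (auto simp: bounded_clinear_def)
  interpret T: bounded_linear T by (rule bl)
  obtain K where K: "\<And>x. norm (T x) \<le> norm x * K" using T.bounded by blast
  have ex: "\<exists>z. \<forall>x. cinner y (T x) = cinner z x" for y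
  proof (rule riesz[where K="norm y * K"])
    show "cinner y (T (x1 + x2)) = cinner y (T x1) + cinner y (T x2)" for x1 x2
      by (simp add: T.add cinner_add_right)
    show "cinner y (T (scaleC a x)) = a * cinner y (T x)" for a x
      by (simp add: Tsc cinner_scaleC_right)
    show "cmod (cinner y (T x)) \<le> norm y * K * norm x" for x
    proof -
      have "cmod (cinner y (T x)) \<le> norm y * norm (T x)" by (rule cinner_CS)
      also have "\<dots> \<le> norm y * (norm x * K)" by (rule mult_left_mono[OF K]) simp
      finally show ?thesis by (simp add: mult_ac)
    qed
  qed
  then obtain S where S: "\<And>y x. cinner y (T x) = cinner (S y) x" by metis
  have PS: "\<forall>x y. cinner (T x) y = cinner x (S y)"
    by (metis S cinner_commute)
  have uniq: "S' = S" if "\<forall>x y. cinner (T x) y = cinner x (S' y)" for S'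
  proof
    fix y show "S' y = S y" using that PS by (intro cinner_ext) auto
  qed
  have "\<forall>x y. cinner (T x) y = cinner x (cadjoint T y)"
    unfolding cadjoint_def
    by (rule theI[where P="\<lambda>S'. \<forall>x y. cinner (T x) y = cinner x (S' y)" and a=S, OF PS uniq])
  then show ?thesis by blast
qed

lemma adjoint_prop2:
  fixes T :: "'a::chilbert \<Rightarrow> 'a"
  assumes "bounded_clinear T"
  shows "cinner y (T x) = cinner (cadjoint T y) x"
  using adjoint_prop[OF assms, of x y] by (metis cinner_commute)

lemma adjoint_bclinear:
  fixes T :: "'a::chilbert \<Rightarrow> 'a"
  assumes T: "bounded_clinear T"
  shows "bounded_clinear (cadjoint T)"
proof -
  define S where "S = cadjoint T"
  have bl: "bounded_linear T" using T by (auto simp: bounded_clinear_def)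
  interpret T: bounded_linear T by (rule bl)
  obtain K where Kpos: "K > 0" and K: "\<And>x. norm (T x) \<le> norm x * K" using T.pos_bounded by blast
  have P: "cinner (T x) y = cinner x (S y)" for x y unfolding S_def by (rule adjoint_prop[OF T])
  have Sadd: "S (a + b) = S a + S b" for a b
    by (rule cinner_ext) (simp add: P[symmetric] cinner_add_right)
  have Ssc: "S (scaleC c a) = scaleC c (S a)" for c a
    by (rule cinner_ext) (simp add: P[symmetric] cinner_scaleC_right)
  have Sbd: "norm (S y) \<le> norm y * K" for y
  proof (cases "S y = 0")
    case True then show ?thesis using Kpos by simp
  next
    case False
    have "(norm (S y))\<^sup>2 = Re (cinner (S y) (S y))" by (simp add: cinner_self_Re)
    also have "\<dots> = Re (cinner (T (S y)) y)" by (simp add: P)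
    also have "\<dots> \<le> norm (T (S y)) * norm y" by (rule Re_cinner_le)
    also have "\<dots> \<le> norm (S y) * K * norm y" by (rule mult_right_mono[OF K]) simp
    finally have "norm (S y) * norm (S y) \<le> norm (S y) * (norm y * K)"
      by (simp add: power2_eq_square mult_ac)
    then show ?thesis using False by simp
  qed
  have "bounded_linear S"
  proof (rule bounded_linear_intro[where K=K])
    show "S (x + y) = S x + S y" for x y by (rule Sadd)
    show "S (r *\<^sub>R x) = r *\<^sub>R S x" for r x by (simp add: scaleR_scaleC Ssc)
    show "norm (S x) \<le> norm x * K" for x by (rule Sbd)
  qed
  then show ?thesis unfolding S_def bounded_clinear_def using Ssc S_def by blast
qed

lemma main_op:
  fixes T1 T2 :: "'a::chilbert \<Rightarrow> 'a" and c :: "nat \<Rightarrow> complex" and N :: nat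
  assumes T1: "bounded_clinear T1" and T2: "bounded_clinear T2"
    and hA: "onorm (\<lambda>x. T1 (cadjoint T1 x) + T2 (cadjoint T2 x)) \<le> 1"
  shows "onorm (\<lambda>x. poly_op c N T1 (T2 x)) \<le> L2_set (\<lambda>j. cmod (c j)) {..N}"
proof -
  define S1 where "S1 = cadjoint T1"
  define S2 where "S2 = cadjoint T2"
  have blT1: "bounded_linear T1" using T1 by (simp add: bounded_clinear_def)
  have blT2: "bounded_linear T2" using T2 by (simp add: bounded_clinear_def)
  have blS1: "bounded_linear S1" using adjoint_bclinear[OF T1] by (simp add: S1_def bounded_clinear_def)
  have blS2: "bounded_linear S2" using adjoint_bclinear[OF T2] by (simp add: S2_def bounded_clinear_def)
  define A where "A z = T1 (S1 z) + T2 (S2 z)" for z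
  have blA: "bounded_linear A" unfolding A_def
    by (intro bounded_linear_add bounded_linear_compose[OF blT1 blS1] bounded_linear_compose[OF blT2 blS2])
  have nA: "norm (A z) \<le> norm z" for z
  proof -
    have "norm (A z) \<le> onorm A * norm z" by (rule onorm[OF blA])
    also have "\<dots> \<le> 1 * norm z"
    proof (intro mult_right_mono)
      have "A = (\<lambda>x. T1 (cadjoint T1 x) + T2 (cadjoint T2 x))" by (simp add: A_def S1_def S2_def fun_eq_iff)
      then show "onorm A \<le> 1" using hA by simp
    qed simp
    finally show ?thesis by simp
  qed
  have key: "(norm (S1 z))\<^sup>2 + (norm (S2 z))\<^sup>2 \<le> (norm z)\<^sup>2" for z
  proof -
    have e1: "cinner (T1 (S1 z)) z = cinner (S1 z) (S1 z)" unfolding S1_def by (rule adjoint_prop[OF T1])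
    have e2: "cinner (T2 (S2 z)) z = cinner (S2 z) (S2 z)" unfolding S2_def by (rule adjoint_prop[OF T2])
    have "(norm (S1 z))\<^sup>2 + (norm (S2 z))\<^sup>2 = Re (cinner (A z) z)"
      by (simp add: A_def cinner_add_left e1 e2 cinner_self_Re)
    also have "\<dots> \<le> norm (A z) * norm z" by (rule Re_cinner_le)
    also have "\<dots> \<le> norm z * norm z" by (rule mult_right_mono[OF nA]) simp
    finally show ?thesis by (simp add: power2_eq_square)
  qed
  define a where "a y j = norm (S2 ((S1^^j) y))" for y j
  have tele: "(\<Sum>j\<le>n. (a y j)\<^sup>2) \<le> (norm y)\<^sup>2 - (norm ((S1^^Suc n) y))\<^sup>2" for n y
  proof (induction n)
    case 0
    then show ?case using key[of y] by (simp add: a_def)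
  next
    case (Suc n)
    have "(a y (Suc n))\<^sup>2 \<le> (norm ((S1^^Suc n) y))\<^sup>2 - (norm ((S1^^Suc (Suc n)) y))\<^sup>2"
      using key[of "(S1^^Suc n) y"] by (simp add: a_def)
    then show ?case using Suc by simp
  qed
  have L2a: "L2_set (a y) {..N} \<le> norm y" for y
  proof -
    have "(\<Sum>j\<le>N. (a y j)\<^sup>2) \<le> (norm y)\<^sup>2" using tele[where n=N and y=y] by (smt (verit) zero_le_power2)
    then have "sqrt (\<Sum>j\<le>N. (a y j)\<^sup>2) \<le> sqrt ((norm y)\<^sup>2)" by (rule real_sqrt_le_mono)
    then show ?thesis by (simp add: L2_set_def)
  qed
  have iter: "cinner y ((T1^^j) w) = cinner ((S1^^j) y) w" for j y w
  proof (induction j arbitrary: y)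
    case 0 then show ?case by simp
  next
    case (Suc j)
    have "cinner y ((T1^^Suc j) w) = cinner (S1 y) ((T1^^j) w)"
      unfolding S1_def by (simp add: adjoint_prop2[OF T1])
    also have "\<dots> = cinner ((S1^^j) (S1 y)) w" by (rule Suc)
    also have "(S1^^j) (S1 y) = (S1^^Suc j) y" by (simp add: funpow_swap1)
    finally show ?case .
  qed
  define P where "P x = poly_op c N T1 (T2 x)" for x
  have inner: "cinner y (P x) = (\<Sum>j\<le>N. c j * cinner (S2 ((S1^^j) y)) x)" for x y
    unfolding P_def poly_op_def cinner_sum_right cinner_scaleC_right iter
    by (simp add: S2_def adjoint_prop2[OF T2])
  define L where "L = L2_set (\<lambda>j. cmod (c j)) {..N}"
  have L0: "L \<ge> 0" by (simp add: L_def L2_set_nonneg)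
  have bound: "cmod (cinner y (P x)) \<le> L * norm y * norm x" for x y
  proof -
    have "cmod (cinner y (P x)) \<le> (\<Sum>j\<le>N. cmod (c j * cinner (S2 ((S1^^j) y)) x))"
      unfolding inner by (rule norm_sum)
    also have "\<dots> \<le> (\<Sum>j\<le>N. \<bar>cmod (c j)\<bar> * \<bar>a y j\<bar> * norm x)"
    proof (rule sum_mono)
      fix j
      have "cmod (cinner (S2 ((S1^^j) y)) x) \<le> a y j * norm x" unfolding a_def by (rule cinner_CS)
      then show "cmod (c j * cinner (S2 ((S1^^j) y)) x) \<le> \<bar>cmod (c j)\<bar> * \<bar>a y j\<bar> * norm x"
        by (simp add: norm_mult a_def mult.assoc mult_left_mono)
    qed
    also have "\<dots> = (\<Sum>j\<le>N. \<bar>cmod (c j)\<bar> * \<bar>a y j\<bar>) * norm x" by (simp add: sum_distrib_right)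
    also have "\<dots> \<le> (L * L2_set (a y) {..N}) * norm x"
      unfolding L_def by (intro mult_right_mono L2_set_mult_ineq) simp
    also have "\<dots> \<le> (L * norm y) * norm x"
      by (intro mult_right_mono mult_left_mono L2a L0) simp_all
    finally show ?thesis .
  qed
  have "norm (P x) \<le> L * norm x" for x
  proof (cases "P x = 0")
    case True then show ?thesis using L0 by simp
  next
    case False
    have "(norm (P x))\<^sup>2 = cmod (cinner (P x) (P x))"
      unfolding cinner_self_norm norm_of_real by simp
    also have "\<dots> \<le> L * norm (P x) * norm x" by (rule bound)
    finally have "norm (P x) * norm (P x) \<le> norm (P x) * (L * norm x)"
      by (simp add: power2_eq_square mult_ac)
    then show ?thesis using False by simp
  qed
  then have "onorm P \<le> L" by (intro onorm_bound L0)
  moreover have "P = (\<lambda>x. poly_op c N T1 (T2 x))" by (simp add: P_def fun_eq_iff)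
  ultimately show ?thesis by (simp add: L_def)
qed

lemma exp_int_integral:
  fixes k :: int
  shows "((\<lambda>t. exp (t *\<^sub>R (\<i> * of_int k))) has_integral
           (if k = 0 then complex_of_real (2*pi) else 0)) {0..2*pi}"
proof (cases "k = 0")
  case True
  show ?thesis using has_integral_const_real[of "1::complex" 0 "2*pi"] True by (simp add: scaleR_conv_of_real)
next
  case False
  define A where "A = \<i> * of_int k"
  have A0: "A \<noteq> 0" using False by (simp add: A_def)
  have "((\<lambda>t. A * exp (t *\<^sub>R A)) has_integral (exp ((2*pi) *\<^sub>R A) - exp (0 *\<^sub>R A))) {0..2*pi}"
    by (rule fundamental_theorem_of_calculus)
       (auto intro: has_vector_derivative_at_within exp_scaleR_has_vector_derivative_left)
  moreover have "exp ((2*pi) *\<^sub>R A) = 1"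
  proof -
    have "(2*pi) *\<^sub>R A = (2 * of_int k * pi) * \<i>" by (simp add: A_def scaleR_conv_of_real mult_ac)
    moreover have "exp ((2 * (of_int k::complex) * pi) * \<i>) = 1" using exp_integer_2pi[of "of_int k"] by simp
    ultimately show ?thesis by simp
  qed
  ultimately have "((\<lambda>t. A * exp (t *\<^sub>R A)) has_integral 0) {0..2*pi}" by simp
  then have "((\<lambda>t. inverse A * (A * exp (t *\<^sub>R A))) has_integral (inverse A * 0)) {0..2*pi}"
    by (rule has_integral_mult_right)
  moreover have "inverse A * (A * e) = e" for e using A0 by (simp add: mult.assoc[symmetric])
  ultimately have "((\<lambda>t. exp (t *\<^sub>R A)) has_integral 0) {0..2*pi}" by simp
  then show ?thesis using False by (simp add: A_def)
qed

lemma term_eq: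
  fixes t :: real
  shows "exp (\<i> * t) ^ j * cnj (exp (\<i> * t)) ^ k = exp (t *\<^sub>R (\<i> * of_int (int j - int k)))"
proof -
  have "exp (\<i> * t) ^ j * cnj (exp (\<i> * t)) ^ k
      = exp (of_nat j * (\<i> * t)) * exp (of_nat k * cnj (\<i> * t))"
    by (simp only: exp_of_nat_mult exp_cnj)
  also have "\<dots> = exp (of_nat j * (\<i> * t) + of_nat k * cnj (\<i> * t))" by (simp only: exp_add)
  also have "of_nat j * (\<i> * t) + of_nat k * cnj (\<i> * t) = t *\<^sub>R (\<i> * of_int (int j - int k))"
    by (simp add: scaleR_conv_of_real algebra_simps)
  finally show ?thesis .
qed

lemma integral_identity:
  fixes c :: "nat \<Rightarrow> complex"
  shows "(1 / (2 * pi)) * integral {0..2 * pi} (\<lambda>t. (cmod (\<Sum>j\<le>N. c j * exp (\<i> * t) ^ j))\<^sup>2)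
       = (\<Sum>j\<le>N. (cmod (c j))\<^sup>2)"
proof -
  define G where "G t = (\<Sum>j\<le>N. \<Sum>k\<le>N. (c j * cnj (c k)) * exp (t *\<^sub>R (\<i> * of_int (int j - int k))))" for t :: real
  have pw: "(cmod (\<Sum>j\<le>N. c j * exp (\<i> * t) ^ j))\<^sup>2 = Re (G t)" for t :: real
  proof -
    define z where "z = (\<Sum>j\<le>N. c j * exp (\<i> * t) ^ j)"
    have "z * cnj z = (\<Sum>j\<le>N. \<Sum>k\<le>N. (c j * exp (\<i> * t) ^ j) * cnj (c k * exp (\<i> * t) ^ k))"
      unfolding z_def cnj_sum by (rule sum_product)
    also have "\<dots> = G t"
      unfolding G_def by (intro sum.cong refl) (simp only: term_eq[symmetric], simp add: mult_ac)
    finally have zz: "z * cnj z = G t" .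
    have "(cmod z)\<^sup>2 = Re (z * cnj z)" by (metis Re_complex_of_real complex_norm_square)
    then have "(cmod z)\<^sup>2 = Re (G t)" using zz by simp
    then show ?thesis by (simp add: z_def)
  qed
  define S where "S = (\<Sum>j\<le>N. (cmod (c j))\<^sup>2)"
  have "(G has_integral (\<Sum>j\<le>N. \<Sum>k\<le>N. (c j * cnj (c k)) *
          (if int j - int k = 0 then complex_of_real (2*pi) else 0))) {0..2*pi}"
    unfolding G_def
    by (intro has_integral_sum finite_atMost has_integral_mult_right exp_int_integral)
  also have "(\<Sum>j\<le>N. \<Sum>k\<le>N. (c j * cnj (c k)) *
          (if int j - int k = 0 then complex_of_real (2*pi) else 0)) = of_real (2 * pi * S)"
  proof -
    have "(\<Sum>k\<le>N. (c j * cnj (c k)) * (if int j - int k = 0 then complex_of_real (2*pi) else 0))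
          = of_real (2 * pi * (cmod (c j))\<^sup>2)" if "j \<le> N" for j
    proof -
      have "(\<Sum>k\<le>N. (c j * cnj (c k)) * (if int j - int k = 0 then complex_of_real (2*pi) else 0))
          = (\<Sum>k\<le>N. if j = k then c j * cnj (c j) * complex_of_real (2*pi) else 0)"
        by (intro sum.cong refl) auto
      also have "\<dots> = c j * cnj (c j) * complex_of_real (2*pi)" using that by simp
      also have "c j * cnj (c j) = of_real ((cmod (c j))\<^sup>2)" by (rule complex_norm_square[symmetric])
      finally show ?thesis by (simp add: mult_ac)
    qed
    then have "(\<Sum>j\<le>N. \<Sum>k\<le>N. (c j * cnj (c k)) *
          (if int j - int k = 0 then complex_of_real (2*pi) else 0)) = (\<Sum>j\<le>N. of_real (2 * pi * (cmod (c j))\<^sup>2))"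
      by (intro sum.cong refl) auto
    also have "\<dots> = of_real (2 * pi * S)" by (simp add: S_def sum_distrib_left)
    finally show ?thesis .
  qed
  finally have "((\<lambda>t. Re (G t)) has_integral Re (of_real (2 * pi * S))) {0..2*pi}"
    by (rule has_integral_Re)
  then have "((\<lambda>t. (cmod (\<Sum>j\<le>N. c j * exp (\<i> * t) ^ j))\<^sup>2) has_integral (2 * pi * S)) {0..2*pi}"
    by (simp add: pw)
  then have "integral {0..2 * pi} (\<lambda>t. (cmod (\<Sum>j\<le>N. c j * exp (\<i> * t) ^ j))\<^sup>2) = 2 * pi * S"
    by (rule integral_unique)
  then show ?thesis by (simp add: S_def)
qed

theorem mainTheorem19:
  fixes T1 T2 :: "'a::chilbert \<Rightarrow> 'a" and c :: "nat \<Rightarrow> complex" and N :: nat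
  assumes "bounded_clinear T1" and "bounded_clinear T2"
    and "onorm (\<lambda>x. T1 (cadjoint T1 x) + T2 (cadjoint T2 x)) \<le> 1"
  shows "onorm (\<lambda>x. poly_op c N T1 (T2 x))
           \<le> sqrt ((1 / (2 * pi)) * integral {0..2 * pi}
                 (\<lambda>t. (cmod (\<Sum>j\<le>N. c j * exp (\<i> * t) ^ j))\<^sup>2))
       \<and> sqrt ((1 / (2 * pi)) * integral {0..2 * pi}
                 (\<lambda>t. (cmod (\<Sum>j\<le>N. c j * exp (\<i> * t) ^ j))\<^sup>2))
           = sqrt (\<Sum>j\<le>N. (cmod (c j))\<^sup>2)"
  using main_op[OF assms, of c N] integral_identity[where N=N and c=c] by (simp add: L2_set_def)

end
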